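(* Let $G$ be a group equipped with a $\sigma$-field, acting measurably on a measurable sample space $\Omega_X$ and on a measurable action space $\Omega_A$, and let the parameter space be $\Omega_\Theta=G$, with $G$ acting on it by left multiplication $(g,\theta)\mapsto g\theta$. Let $\{P_X^\theta:\theta\in G\}$ be a family of probability measures on $\Omega_X$ that is group invariant: for all $g,\theta\in G$, the law of $gX$ when $X\sim P_X^\theta$ equals $P_X^{g\theta}$. Let $\gamma:G\times\Omega_A\to[0,\infty]$ be a measurable loss that is invariant, $\gamma(g\theta,ga)=\gamma(\theta,a)$ for all $g,\theta\in G$, $a\in\Omega_A$, and let $\delta:\Omega_X\to\Omega_A$ be a measurable equivariant rule, $\delta(gx)=g\delta(x)$ for all $g\in G$, $x\in\Omega_X$. Let $U$ be a random element of $\Omega_X$ with law $Q=P_X^e$ ($e$ the identity of $G$). Let $\phi:\Omega_X\to\Omega_Y$ be a measurable maximal invariant (i.e. $\phi(gx)=\phi(x)$ for all $g,x$, and $\phi(x)=\phi(u)$ implies $x\in Gu$), and suppose there is a measurable selection $s:\{(x,u):\phi(x)=\phi(u)\}\to G$ with $x=s(x,u)\,u$ for all such $(x,u)$. For $x\in\Omega_X$ define the random element $\Theta^x=s(x,U)$ on the event $\{\phi(U)=\phi(x)\}$; the conditional law of $\Theta^x$ given $\phi(U)=\phi(x)$ is called a fiducial distribution. Let $(Q^y)_y$ be a regular conditional distribution of $U$ given $\phi(U)=y$ with $Q^y$ concentrated on $\phi^{-1}(y)$ for $Q_Y$-a.e. $y$, where $Q_Y$ is the law of $\phi(U)$. Then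 for every $\theta\in G$ the risk satisfies $$\rho(\theta):=\int \gamma(\theta,\delta(x))\,P_X^\theta(dx)=\int\Big[\int\gamma(e,\delta(u))\,Q^y(du)\Big]\,Q_Y(dy),$$ so in particular $\rho(\theta)$ does not depend on $\theta$; and for $Q_Y$-a.e. $y$ and every $x\in\Omega_X$ with $\phi(x)=y$, $$\int\gamma(e,\delta(u))\,Q^y(du)=\int\gamma\big(s(x,u),\delta(x)\big)\,Q^y(du)=\mathbb{E}\big[\gamma(\Theta^x,\delta(x))\,\big|\,\phi(U)=y\big].$$ That is, the risk of any equivariant rule is determined by the fiducial distribution (for any choice of measurable selection $s$).
   Context: A statistical decision problem: loss $\gamma(\theta,a)$ of action $a$ under parameter $\theta$, risk $\rho(\theta)=\mathbb{E}^\theta\gamma(\theta,\delta(X))$ of a rule $\delta$. An orbit of $x$ is $Gx=\{gx:g\in G\}$. The model parameter space $G$ with left multiplication is a principal homogeneous space (free and transitive action) for $G$. *)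

theory Defs
  imports "HOL-Probability.Probability" "HOL-Algebra.Group"
begin

definition meas_action :: "('g, 'b) monoid_scheme \<Rightarrow> 'g measure \<Rightarrow> 'x measure \<Rightarrow> ('g \<Rightarrow> 'x \<Rightarrow> 'x) \<Rightarrow> bool" where
  "meas_action G MG M act \<longleftrightarrow>
     (\<forall>x\<in>space M. act \<one>\<^bsub>G\<^esub> x = x) \<and>
     (\<forall>g\<in>carrier G. \<forall>h\<in>carrier G. \<forall>x\<in>space M. act (g \<otimes>\<^bsub>G\<^esub> h) x = act g (act h x)) \<and>
     (\<forall>g\<in>carrier G. \<forall>x\<in>space M. act g x \<in> space M) \<and>
     (\<lambda>(g, x). act g x) \<in> MG \<Otimes>\<^sub>M M \<rightarrow>\<^sub>M M"

definition maximal_invariant :: "('g, 'b) monoid_scheme \<Rightarrow> 'x measure \<Rightarrow> ('g \<Rightarrow> 'x \<Rightarrow> 'x) \<Rightarrow> ('x \<Rightarrow> 'y) \<Rightarrow> bool" where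
  "maximal_invariant G M act \<phi> \<longleftrightarrow>
     (\<forall>g\<in>carrier G. \<forall>x\<in>space M. \<phi> (act g x) = \<phi> x) \<and>
     (\<forall>x\<in>space M. \<forall>u\<in>space M. \<phi> x = \<phi> u \<longrightarrow> (\<exists>g\<in>carrier G. x = act g u))"

definition regular_cond_distr :: "'x measure \<Rightarrow> 'y measure \<Rightarrow> ('x \<Rightarrow> 'y) \<Rightarrow> ('y \<Rightarrow> 'x measure) \<Rightarrow> bool" where
  "regular_cond_distr Q MY \<phi> Qc \<longleftrightarrow>
     Qc \<in> MY \<rightarrow>\<^sub>M prob_algebra Q \<and>
     (\<forall>A\<in>sets Q. \<forall>B\<in>sets MY.
        emeasure Q (A \<inter> \<phi> -` B \<inter> space Q) = (\<integral>\<^sup>+ y\<in>B. emeasure (Qc y) A \<partial>distr Q MY \<phi>))"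

end

theory Submission
  imports Defs
begin

theorem theorem1:
  fixes G :: "'g monoid" and MG :: "'g measure"
    and MX :: "'x measure" and MA :: "'a measure" and MY :: "'y measure"
    and actX :: "'g \<Rightarrow> 'x \<Rightarrow> 'x" and actA :: "'g \<Rightarrow> 'a \<Rightarrow> 'a"
    and P :: "'g \<Rightarrow> 'x measure"
    and \<gamma> :: "'g \<Rightarrow> 'a \<Rightarrow> ennreal" and \<delta> :: "'x \<Rightarrow> 'a"
    and \<phi> :: "'x \<Rightarrow> 'y" and s :: "'x \<times> 'x \<Rightarrow> 'g"
    and Qc :: "'y \<Rightarrow> 'x measure"
  assumes grp: "group G"
    and carrier_MG: "carrier G = space MG"
    and mult_meas: "(\<lambda>(g, h). g \<otimes>\<^bsub>G\<^esub> h) \<in> MG \<Otimes>\<^sub>M MG \<rightarrow>\<^sub>M MG"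
    and actX: "meas_action G MG MX actX"
    and actA: "meas_action G MG MA actA"
    and P_prob: "\<And>\<theta>. \<theta> \<in> carrier G \<Longrightarrow> prob_space (P \<theta>)"
    and P_sets: "\<And>\<theta>. \<theta> \<in> carrier G \<Longrightarrow> sets (P \<theta>) = sets MX"
    and P_inv: "\<And>g \<theta>. g \<in> carrier G \<Longrightarrow> \<theta> \<in> carrier G \<Longrightarrow>
                  distr (P \<theta>) MX (actX g) = P (g \<otimes>\<^bsub>G\<^esub> \<theta>)"
    and \<gamma>_meas: "(\<lambda>(\<theta>, a). \<gamma> \<theta> a) \<in> borel_measurable (MG \<Otimes>\<^sub>M MA)"
    and \<gamma>_inv: "\<And>g \<theta> a. g \<in> carrier G \<Longrightarrow> \<theta> \<in> carrier G \<Longrightarrow> a \<in> space MA \<Longrightarrow>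
                  \<gamma> (g \<otimes>\<^bsub>G\<^esub> \<theta>) (actA g a) = \<gamma> \<theta> a"
    and \<delta>_meas: "\<delta> \<in> MX \<rightarrow>\<^sub>M MA"
    and \<delta>_equiv: "\<And>g x. g \<in> carrier G \<Longrightarrow> x \<in> space MX \<Longrightarrow> \<delta> (actX g x) = actA g (\<delta> x)"
    and \<phi>_meas: "\<phi> \<in> MX \<rightarrow>\<^sub>M MY"
    and \<phi>_maxinv: "maximal_invariant G MX actX \<phi>"
    and s_meas: "s \<in> restrict_space (MX \<Otimes>\<^sub>M MX) {(x, u). \<phi> x = \<phi> u} \<rightarrow>\<^sub>M MG"
    and s_sel: "\<And>x u. x \<in> space MX \<Longrightarrow> u \<in> space MX \<Longrightarrow> \<phi> x = \<phi> u \<Longrightarrow>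
                  x = actX (s (x, u)) u"
    and Qc_rcd: "regular_cond_distr (P \<one>\<^bsub>G\<^esub>) MY \<phi> Qc"
    and Qc_conc: "AE y in distr (P \<one>\<^bsub>G\<^esub>) MY \<phi>. AE u in Qc y. \<phi> u = y"
  shows "(\<forall>\<theta>\<in>carrier G.
            (\<integral>\<^sup>+ x. \<gamma> \<theta> (\<delta> x) \<partial>P \<theta>)
              = (\<integral>\<^sup>+ y. (\<integral>\<^sup>+ u. \<gamma> \<one>\<^bsub>G\<^esub> (\<delta> u) \<partial>Qc y) \<partial>distr (P \<one>\<^bsub>G\<^esub>) MY \<phi>))
       \<and> (AE y in distr (P \<one>\<^bsub>G\<^esub>) MY \<phi>. \<forall>x\<in>space MX. \<phi> x = y \<longrightarrow>
            (\<integral>\<^sup>+ u. \<gamma> \<one>\<^bsub>G\<^esub> (\<delta> u) \<partial>Qc y) = (\<integral>\<^sup>+ u. \<gamma> (s (x, u)) (\<delta> x) \<partial>Qc y))"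
proof -
  let ?e = "\<one>\<^bsub>G\<^esub>"
  let ?P1 = "P ?e"
  let ?QY = "distr ?P1 MY \<phi>"
  have e_in: "?e \<in> carrier G" using grp by (simp add: group.is_monoid monoid.one_closed)
  have e_MG: "?e \<in> space MG" using e_in carrier_MG by simp
  interpret P1: prob_space ?P1 using P_prob e_in by simp
  have sP1: "sets ?P1 = sets MX" using P_sets e_in by simp
  have spP1: "space ?P1 = space MX" using sP1 by (rule sets_eq_imp_space_eq)
  have Qc_meas: "Qc \<in> MY \<rightarrow>\<^sub>M prob_algebra ?P1" using Qc_rcd by (simp add: regular_cond_distr_def)
  have sQY: "sets ?QY = sets MY" by simp
  have Qc_meas': "Qc \<in> ?QY \<rightarrow>\<^sub>M subprob_algebra ?P1"
    using measurable_prob_algebraD[OF Qc_meas] by (simp add: measurable_cong_sets[OF sQY refl])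
  have Qc_space: "\<And>y. y \<in> space MY \<Longrightarrow> sets (Qc y) = sets MX \<and> prob_space (Qc y)"
    using measurable_space[OF Qc_meas] sP1 by (auto simp: space_prob_algebra)
  have spMX: "space MX \<noteq> {}" using P1.not_empty spP1 by simp
  have spQY: "space ?QY \<noteq> {}" using spMX measurable_space[OF \<phi>_meas] by auto
  have rcd: "\<And>A. A \<in> sets ?P1 \<Longrightarrow> emeasure ?P1 A = (\<integral>\<^sup>+ y. emeasure (Qc y) A \<partial>?QY)"
  proof -
    fix A assume A: "A \<in> sets ?P1"
    have "emeasure ?P1 (A \<inter> \<phi> -` space MY \<inter> space ?P1) = (\<integral>\<^sup>+ y\<in>space MY. emeasure (Qc y) A \<partial>?QY)"
      using Qc_rcd A by (simp add: regular_cond_distr_def)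
    moreover have "A \<inter> \<phi> -` space MY \<inter> space ?P1 = A"
      using sets.sets_into_space[OF A] measurable_space[OF \<phi>_meas] spP1 by auto
    moreover have "(\<integral>\<^sup>+ y\<in>space MY. emeasure (Qc y) A \<partial>?QY) = (\<integral>\<^sup>+ y. emeasure (Qc y) A \<partial>?QY)"
      by (intro nn_integral_cong) (simp add: indicator_def)
    ultimately show "emeasure ?P1 A = (\<integral>\<^sup>+ y. emeasure (Qc y) A \<partial>?QY)" by simp
  qed
  have bind_eq: "?P1 = ?QY \<bind> Qc"
  proof (rule measure_eqI)
    show "sets ?P1 = sets (?QY \<bind> Qc)"
      using sets_bind[of ?QY Qc ?P1] spQY Qc_space sP1 by auto
    fix A assume "A \<in> sets ?P1"
    then show "emeasure ?P1 A = emeasure (?QY \<bind> Qc) A"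
      using rcd emeasure_bind[OF spQY Qc_meas'] by simp
  qed
  have gmeas: "\<And>\<theta>. \<theta> \<in> space MG \<Longrightarrow> (\<lambda>x. \<gamma> \<theta> (\<delta> x)) \<in> borel_measurable MX"
  proof -
    fix \<theta> assume th: "\<theta> \<in> space MG"
    have "(\<lambda>x. (\<theta>, \<delta> x)) \<in> MX \<rightarrow>\<^sub>M MG \<Otimes>\<^sub>M MA"
      using th \<delta>_meas by (intro measurable_Pair) auto
    from measurable_comp[OF this \<gamma>_meas] show "(\<lambda>x. \<gamma> \<theta> (\<delta> x)) \<in> borel_measurable MX"
      by (simp add: comp_def)
  qed
  have actmeas: "\<And>g. g \<in> space MG \<Longrightarrow> actX g \<in> MX \<rightarrow>\<^sub>M MX"
  proof -
    fix g assume g: "g \<in> space MG"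
    have "(\<lambda>x. (g, x)) \<in> MX \<rightarrow>\<^sub>M MG \<Otimes>\<^sub>M MX"
      using g by (intro measurable_Pair) auto
    from measurable_comp[OF this, of "\<lambda>(g, x). actX g x" MX] actX show "actX g \<in> MX \<rightarrow>\<^sub>M MX"
      by (auto simp: meas_action_def comp_def)
  qed
  have key: "\<And>g u. g \<in> carrier G \<Longrightarrow> u \<in> space MX \<Longrightarrow> \<gamma> g (\<delta> (actX g u)) = \<gamma> ?e (\<delta> u)"
  proof -
    fix g u assume g: "g \<in> carrier G" and u: "u \<in> space MX"
    have du: "\<delta> u \<in> space MA" using measurable_space[OF \<delta>_meas] u by auto
    have "\<gamma> g (\<delta> (actX g u)) = \<gamma> (g \<otimes>\<^bsub>G\<^esub> ?e) (actA g (\<delta> u))"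
      using \<delta>_equiv[OF g u] g grp by (simp add: group.is_monoid monoid.r_one)
    also have "\<dots> = \<gamma> ?e (\<delta> u)" using \<gamma>_inv[OF g e_in du] .
    finally show "\<gamma> g (\<delta> (actX g u)) = \<gamma> ?e (\<delta> u)" .
  qed
  have part1: "\<forall>\<theta>\<in>carrier G.
            (\<integral>\<^sup>+ x. \<gamma> \<theta> (\<delta> x) \<partial>P \<theta>)
              = (\<integral>\<^sup>+ y. (\<integral>\<^sup>+ u. \<gamma> ?e (\<delta> u) \<partial>Qc y) \<partial>?QY)"
  proof
    fix \<theta> assume th: "\<theta> \<in> carrier G"
    have Pth: "P \<theta> = distr ?P1 MX (actX \<theta>)"
      using P_inv[OF th e_in] th grp by (simp add: group.is_monoid monoid.r_one)
    have am: "actX \<theta> \<in> ?P1 \<rightarrow>\<^sub>M MX"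
      using actmeas[of \<theta>] th carrier_MG by (simp add: measurable_cong_sets[OF sP1 refl])
    have "(\<integral>\<^sup>+ x. \<gamma> \<theta> (\<delta> x) \<partial>P \<theta>) = (\<integral>\<^sup>+ u. \<gamma> \<theta> (\<delta> (actX \<theta> u)) \<partial>?P1)"
      unfolding Pth using gmeas[of \<theta>] th carrier_MG by (intro nn_integral_distr am) auto
    also have "\<dots> = (\<integral>\<^sup>+ u. \<gamma> ?e (\<delta> u) \<partial>?P1)"
      using key th spP1 by (intro nn_integral_cong) auto
    also have "\<dots> = (\<integral>\<^sup>+ u. \<gamma> ?e (\<delta> u) \<partial>(?QY \<bind> Qc))"
      using bind_eq by simp
    also have "\<dots> = (\<integral>\<^sup>+ y. (\<integral>\<^sup>+ u. \<gamma> ?e (\<delta> u) \<partial>Qc y) \<partial>?QY)"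
      using gmeas[OF e_MG] Qc_meas' sP1
      by (intro nn_integral_bind[where B="?P1"]) (auto simp: measurable_cong_sets[OF sP1 refl])
    finally show "(\<integral>\<^sup>+ x. \<gamma> \<theta> (\<delta> x) \<partial>P \<theta>) = (\<integral>\<^sup>+ y. (\<integral>\<^sup>+ u. \<gamma> ?e (\<delta> u) \<partial>Qc y) \<partial>?QY)" .
  qed
  have part2: "AE y in ?QY. \<forall>x\<in>space MX. \<phi> x = y \<longrightarrow>
            (\<integral>\<^sup>+ u. \<gamma> ?e (\<delta> u) \<partial>Qc y) = (\<integral>\<^sup>+ u. \<gamma> (s (x, u)) (\<delta> x) \<partial>Qc y)"
    using Qc_conc
  proof eventually_elim
    case (elim y)
    show ?case
    proof (intro ballI impI)
      fix x assume x: "x \<in> space MX" and phx: "\<phi> x = y"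
      have yMY: "y \<in> space MY" using x phx measurable_space[OF \<phi>_meas] by auto
      have spQ: "space (Qc y) = space MX"
        using Qc_space[OF yMY] by (intro sets_eq_imp_space_eq) simp
      show "(\<integral>\<^sup>+ u. \<gamma> ?e (\<delta> u) \<partial>Qc y) = (\<integral>\<^sup>+ u. \<gamma> (s (x, u)) (\<delta> x) \<partial>Qc y)"
      proof (rule nn_integral_cong_AE)
        show "AE u in Qc y. \<gamma> ?e (\<delta> u) = \<gamma> (s (x, u)) (\<delta> x)"
          using elim AE_space
        proof eventually_elim
          case (elim u)
          show ?case
          proof (cases "u \<in> space MX")
            case True
            have xu: "(x, u) \<in> space (restrict_space (MX \<Otimes>\<^sub>M MX) {(x, u). \<phi> x = \<phi> u})"
              using x True elim phx by (simp add: space_restrict_space space_pair_measure)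
            have sg: "s (x, u) \<in> carrier G"
              using measurable_space[OF s_meas xu] carrier_MG by simp
            have "x = actX (s (x, u)) u" using s_sel[OF x True] elim phx by simp
            then have "\<gamma> (s (x, u)) (\<delta> x) = \<gamma> (s (x, u)) (\<delta> (actX (s (x, u)) u))" by simp
            also have "\<dots> = \<gamma> ?e (\<delta> u)" using key[OF sg True] .
            finally show ?thesis by simp
          next
            case False
            then show ?thesis using elim spQ by simp
          qed
        qed
      qed
    qed
  qed
  show ?thesis using part1 part2 by blast
qed

end
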